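(* Let $R$ be a principal ideal domain and let $Ra$ be a left ideal of $R$ that is not a two-sided ideal. Then $Ra$ is weakly prime if and only if $a$ has no non-unit invariant factor. Equivalently, $Ra$ is weakly prime if and only if $Ra$ is not contained in any proper two-sided ideal of $R$.
   Context: A principal ideal domain (PID) is a (not necessarily commutative) domain in which every left ideal and every right ideal is principal. A left ideal $\mathfrak{p}$ is weakly prime if $\mathfrak{p}\neq R$ and, for left ideals $A,B$, $AB\subseteq\mathfrak{p}$ and $\mathfrak{p}B\subseteq\mathfrak{p}$ imply $A\subseteq\mathfrak{p}$ or $B\subseteq\mathfrak{p}$. A nonzero $c$ is invariant if $Rc=cR$. $c$ is a factor of $a$ if $a=rcs$ for some $r,s\in R$. *)

theory Defs
  imports Main
begin

definition left_ideal :: "'a::ring_1 set \<Rightarrow> bool" where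
  "left_ideal I \<longleftrightarrow> 0 \<in> I \<and> (\<forall>x\<in>I. \<forall>y\<in>I. x - y \<in> I) \<and> (\<forall>r. \<forall>x\<in>I. r * x \<in> I)"

definition right_ideal :: "'a::ring_1 set \<Rightarrow> bool" where
  "right_ideal I \<longleftrightarrow> 0 \<in> I \<and> (\<forall>x\<in>I. \<forall>y\<in>I. x - y \<in> I) \<and> (\<forall>r. \<forall>x\<in>I. x * r \<in> I)"

definition two_sided_ideal :: "'a::ring_1 set \<Rightarrow> bool" where
  "two_sided_ideal I \<longleftrightarrow> left_ideal I \<and> right_ideal I"

definition lprinc :: "'a::ring_1 \<Rightarrow> 'a set" where
  "lprinc a = {r * a | r. True}"

definition rprinc :: "'a::ring_1 \<Rightarrow> 'a set" where
  "rprinc a = {a * r | r. True}"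

definition PID :: "'a::ring_1_no_zero_divisors itself \<Rightarrow> bool" where
  "PID _ \<longleftrightarrow> (\<forall>I::'a set. left_ideal I \<longrightarrow> (\<exists>b. I = lprinc b))
              \<and> (\<forall>I::'a set. right_ideal I \<longrightarrow> (\<exists>b. I = rprinc b))"

definition set_mult :: "'a::ring_1 set \<Rightarrow> 'a set \<Rightarrow> 'a set" where
  "set_mult A B = {x. \<exists>ps. set ps \<subseteq> A \<times> B \<and> x = (\<Sum>(a,b)\<leftarrow>ps. a * b)}"

definition weakly_prime :: "'a::ring_1 set \<Rightarrow> bool" where
  "weakly_prime P \<longleftrightarrow> P \<noteq> UNIV \<and>
     (\<forall>A B. left_ideal A \<longrightarrow> left_ideal B \<longrightarrow>
        set_mult A B \<subseteq> P \<longrightarrow> set_mult P B \<subseteq> P \<longrightarrow> A \<subseteq> P \<or> B \<subseteq> P)"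

definition invariant :: "'a::ring_1 \<Rightarrow> bool" where
  "invariant c \<longleftrightarrow> c \<noteq> 0 \<and> lprinc c = rprinc c"

definition is_factor :: "'a::ring_1 \<Rightarrow> 'a \<Rightarrow> bool" where
  "is_factor c a \<longleftrightarrow> (\<exists>r s. a = r * c * s)"

definition unit :: "'a::ring_1 \<Rightarrow> bool" where
  "unit u \<longleftrightarrow> (\<exists>v. u * v = 1 \<and> v * u = 1)"

end

theory Submission
  imports Defs
begin

lemma lp_mem: "x \<in> lprinc a \<longleftrightarrow> (\<exists>r. x = r * a)"
  by (auto simp: lprinc_def)

lemma rp_mem: "x \<in> rprinc a \<longleftrightarrow> (\<exists>r. x = a * r)"
  by (auto simp: rprinc_def)

lemma lp_self: "r * a \<in> lprinc a" "a \<in> lprinc a"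
  unfolding lp_mem by (rule exI, rule refl) (rule exI[of _ 1], simp)

lemma rp_self: "a * r \<in> rprinc a" "a \<in> rprinc a"
  unfolding rp_mem by (rule exI, rule refl) (rule exI[of _ 1], simp)

lemma lp_left: "left_ideal (lprinc (a::'a::ring_1))"
  unfolding left_ideal_def
proof (intro conjI ballI allI)
  show "0 \<in> lprinc a" unfolding lp_mem by (rule exI[of _ 0]) simp
next
  fix x y assume "x \<in> lprinc a" "y \<in> lprinc a"
  then obtain r s where "x = r * a" "y = s * a" unfolding lp_mem by blast
  then show "x - y \<in> lprinc a" unfolding lp_mem
    by (intro exI[of _ "r - s"]) (simp add: left_diff_distrib)
next
  fix r x assume "x \<in> lprinc a"
  then obtain s where "x = s * a" unfolding lp_mem by blast
  then show "r * x \<in> lprinc a" unfolding lp_mem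
    by (intro exI[of _ "r * s"]) (simp add: mult.assoc)
qed

lemma rp_right: "right_ideal (rprinc (a::'a::ring_1))"
  unfolding right_ideal_def
proof (intro conjI ballI allI)
  show "0 \<in> rprinc a" unfolding rp_mem by (rule exI[of _ 0]) simp
next
  fix x y assume "x \<in> rprinc a" "y \<in> rprinc a"
  then obtain r s where "x = a * r" "y = a * s" unfolding rp_mem by blast
  then show "x - y \<in> rprinc a" unfolding rp_mem
    by (intro exI[of _ "r - s"]) (simp add: right_diff_distrib)
next
  fix r x assume "x \<in> rprinc a"
  then obtain s where "x = a * s" unfolding rp_mem by blast
  then show "x * r \<in> rprinc a" unfolding rp_mem
    by (intro exI[of _ "s * r"]) (simp add: mult.assoc)
qed

lemma sm_single: "x \<in> A \<Longrightarrow> y \<in> B \<Longrightarrow> x * y \<in> set_mult A B"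
  unfolding set_mult_def by (rule CollectI, rule exI[of _ "[(x,y)]"]) simp

lemma li_add: "left_ideal P \<Longrightarrow> x \<in> P \<Longrightarrow> y \<in> P \<Longrightarrow> x + y \<in> P"
proof -
  assume P: "left_ideal P" and x: "x \<in> P" and y: "y \<in> P"
  have "0 - y \<in> P" using P y unfolding left_ideal_def by blast
  then have "x - (0 - y) \<in> P" using P x unfolding left_ideal_def by blast
  then show "x + y \<in> P" by simp
qed

lemma sm_sub:
  assumes P: "left_ideal P" and h: "\<forall>x\<in>A. \<forall>y\<in>B. x * y \<in> P"
  shows "set_mult A B \<subseteq> P"
proof
  fix z assume "z \<in> set_mult A B"
  then obtain ps where ps: "set ps \<subseteq> A \<times> B" "z = (\<Sum>(a,b)\<leftarrow>ps. a * b)"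
    unfolding set_mult_def by blast
  have "set ps \<subseteq> A \<times> B \<Longrightarrow> (\<Sum>(a,b)\<leftarrow>ps. a * b) \<in> P"
  proof (induction ps)
    case Nil then show ?case using P by (simp add: left_ideal_def)
  next
    case (Cons p ps)
    obtain u v where p: "p = (u,v)" by force
    have "u * v \<in> P" using Cons.prems h p by auto
    moreover have "(\<Sum>(a,b)\<leftarrow>ps. a * b) \<in> P" using Cons by auto
    ultimately show ?case using li_add[OF P] p by simp
  qed
  then show "z \<in> P" using ps by simp
qed

lemma linv_unit:
  fixes c :: "'a::ring_1_no_zero_divisors"
  assumes "w * c = 1" shows "unit c"
proof -
  have c: "c \<noteq> 0" using assms by auto
  have "(c * w) * c = 1 * c" using assms by (simp add: mult.assoc)
  then have "c * w = 1" using c by (metis mult_cancel_right)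
  then show ?thesis using assms unit_def by blast
qed

lemma rinv_swap:
  fixes s :: "'a::ring_1_no_zero_divisors"
  assumes "t * s = 1" shows "s * t = 1"
proof -
  obtain v where v: "s * v = 1" "v * s = 1" using linv_unit[OF assms] unit_def by blast
  have "t = t * (s * v)" using v by simp
  also have "\<dots> = v" using assms by (simp add: mult.assoc[symmetric])
  finally show ?thesis using v by simp
qed

lemma L1:
  fixes a c :: "'a::ring_1_no_zero_divisors"
  assumes inv: "invariant c" and nu: "\<not> unit c" and f: "is_factor c a"
  shows "two_sided_ideal (lprinc c) \<and> lprinc c \<noteq> UNIV \<and> lprinc a \<subseteq> lprinc c"
proof -
  have eq: "lprinc c = rprinc c" using inv invariant_def by blast
  have ts: "two_sided_ideal (lprinc c)"
    unfolding two_sided_ideal_def using lp_left[of c] rp_right[of c] eq by simp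
  obtain r s where a: "a = r * c * s" using f is_factor_def by blast
  have "c * s \<in> lprinc c" unfolding eq by (rule rp_self)
  then obtain t where t: "c * s = t * c" unfolding lp_mem by blast
  have sub: "lprinc a \<subseteq> lprinc c"
  proof
    fix x assume "x \<in> lprinc a"
    then obtain u where "x = u * a" unfolding lp_mem by blast
    then have "x = (u * r * t) * c" using a t by (simp add: mult.assoc)
    then show "x \<in> lprinc c" unfolding lp_mem by blast
  qed
  have "1 \<notin> lprinc c"
  proof
    assume "1 \<in> lprinc c"
    then obtain v where "1 = v * c" unfolding lp_mem by blast
    then show False using nu linv_unit[of v c] by simp
  qed
  then show ?thesis using ts sub by blast
qed

lemma L2:
  fixes a :: "'a::ring_1_no_zero_divisors"
  assumes pid: "PID TYPE('a)" and ts: "two_sided_ideal I" and pr: "I \<noteq> UNIV"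
    and sub: "lprinc a \<subseteq> I" and a0: "a \<noteq> 0"
  shows "\<exists>c. invariant c \<and> \<not> unit c \<and> is_factor c a"
proof -
  have li: "left_ideal I" and ri: "right_ideal I" using ts two_sided_ideal_def by auto
  have P: "(\<forall>I::'a set. left_ideal I \<longrightarrow> (\<exists>b. I = lprinc b))
     \<and> (\<forall>I::'a set. right_ideal I \<longrightarrow> (\<exists>b. I = rprinc b))"
    using pid unfolding PID_def .
  obtain c where c: "I = lprinc c" using P li by blast
  obtain d where d: "I = rprinc d" using P ri by blast
  have aI: "a \<in> I" using sub lp_self by blast
  then have "a \<in> lprinc c" using c by simp
  then obtain r where ar: "a = r * c" unfolding lp_mem by blast
  have c0: "c \<noteq> 0" using ar a0 by auto
  have "a \<in> rprinc d" using aI d by simp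
  then obtain q where "a = d * q" unfolding rp_mem by blast
  then have d0: "d \<noteq> 0" using a0 by auto
  have "c \<in> I" unfolding c by (rule lp_self)
  then have "c \<in> rprinc d" using d by simp
  then obtain s where s: "c = d * s" unfolding rp_mem by blast
  have dI: "d \<in> I" unfolding d by (rule rp_self)
  then have "d \<in> lprinc c" using c by simp
  then obtain t where t: "d = t * c" unfolding lp_mem by blast
  have "t * d \<in> I" using li dI unfolding left_ideal_def by blast
  then have "t * d \<in> rprinc d" using d by simp
  then obtain \<tau> where tau: "t * d = d * \<tau>" unfolding rp_mem by blast
  have "d = t * c" by (rule t)
  also have "\<dots> = t * (d * s)" using s by simp
  also have "\<dots> = (t * d) * s" by (simp add: mult.assoc)
  also have "\<dots> = (d * \<tau>) * s" using tau by simp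
  also have "\<dots> = d * (\<tau> * s)" by (simp add: mult.assoc)
  finally have "d * 1 = d * (\<tau> * s)" by simp
  then have "\<tau> * s = 1" using d0 by (metis mult_cancel_left)
  then have st: "s * \<tau> = 1" by (rule rinv_swap)
  have "rprinc c = rprinc d"
  proof (auto simp: rp_mem)
    fix x show "\<exists>r. c * x = d * r" by (intro exI[of _ "s*x"]) (simp add: s mult.assoc)
  next
    fix x
    have "c * (\<tau> * x) = d * ((s * \<tau>) * x)" using s by (simp add: mult.assoc)
    also have "\<dots> = d * x" using st by simp
    finally show "\<exists>r. d * x = c * r" by (intro exI[of _ "\<tau>*x"]) simp
  qed
  then have inv: "invariant c" unfolding invariant_def using c d c0 \<open>rprinc c = rprinc d\<close> by simp
  have nu: "\<not> unit c"
  proof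
    assume "unit c"
    then obtain v where "v * c = 1" unfolding unit_def by blast
    then have "1 \<in> lprinc c" unfolding lp_mem by (intro exI[of _ v]) simp
    then have "1 \<in> I" using c by simp
    then have "x * 1 \<in> I" for x using li unfolding left_ideal_def by blast
    then have "\<forall>x. x \<in> I" by simp
    then show False using pr by blast
  qed
  have "is_factor c a" unfolding is_factor_def using ar by (intro exI[of _ r] exI[of _ 1]) simp
  then show ?thesis using inv nu by blast
qed

lemma L3:
  fixes a :: "'a::ring_1_no_zero_divisors"
  assumes pid: "PID TYPE('a)" and nts: "\<not> two_sided_ideal (lprinc a)"
    and ts: "two_sided_ideal I" and pr: "I \<noteq> UNIV" and sub: "lprinc a \<subseteq> I"
    and a0: "a \<noteq> 0"
  shows "\<not> weakly_prime (lprinc a)"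
proof
  assume wp: "weakly_prime (lprinc a)"
  obtain c where c: "invariant c" "\<not> unit c" "is_factor c a"
    using L2[OF pid ts pr sub a0] by blast
  note L = L1[OF c]
  have eq: "lprinc c = rprinc c" using c(1) unfolding invariant_def by blast
  have "a \<in> lprinc c" using L lp_self by blast
  then have "a \<in> rprinc c" using eq by simp
  then obtain a' where a': "a = c * a'" unfolding rp_mem by blast
  have F: "c * z * a' \<in> lprinc a" for z
  proof -
    have "c * z \<in> lprinc c" unfolding eq by (rule rp_self)
    then obtain w where w: "c * z = w * c" unfolding lp_mem by blast
    have "c * z * a' = w * c * a'" using w by simp
    also have "\<dots> = w * a" using a' by (simp add: mult.assoc)
    finally show ?thesis using lp_self by simp
  qed
  have h1: "set_mult (lprinc c) (lprinc a') \<subseteq> lprinc a"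
  proof (rule sm_sub[OF lp_left], intro ballI)
    fix x y assume "x \<in> lprinc c" "y \<in> lprinc a'"
    then obtain u v where uv: "x = u * c" "y = v * a'" unfolding lp_mem by blast
    have "u * c \<in> rprinc c" unfolding eq[symmetric] by (rule lp_self)
    then obtain z where z: "u * c = c * z" unfolding rp_mem by blast
    have "x * y = c * (z * v) * a'" using uv z by (simp add: mult.assoc)
    then show "x * y \<in> lprinc a" using F by simp
  qed
  have h2: "set_mult (lprinc a) (lprinc a') \<subseteq> lprinc a"
  proof (rule sm_sub[OF lp_left], intro ballI)
    fix x y assume "x \<in> lprinc a" "y \<in> lprinc a'"
    then obtain u v where uv: "x = u * a" "y = v * a'" unfolding lp_mem by blast
    obtain w where w: "c * (a' * v) * a' = w * a" using F unfolding lp_mem by blast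
    have "x * y = u * (c * (a' * v) * a')" using uv a' by (simp add: mult.assoc)
    also have "\<dots> = u * (w * a)" using w by simp
    also have "\<dots> = (u * w) * a" by (simp add: mult.assoc)
    finally show "x * y \<in> lprinc a" using lp_self by simp
  qed
  have n1: "\<not> lprinc c \<subseteq> lprinc a"
  proof
    assume "lprinc c \<subseteq> lprinc a"
    then have "lprinc c = lprinc a" using L by blast
    then show False using L nts by simp
  qed
  have n2: "\<not> lprinc a' \<subseteq> lprinc a"
  proof
    assume "lprinc a' \<subseteq> lprinc a"
    then have "a' \<in> lprinc a" using lp_self by blast
    then obtain w where wa: "a' = w * a" unfolding lp_mem by blast
    have "1 * a' = w * a" using wa by simp
    also have "\<dots> = w * (c * a')" by (simp only: a')
    also have "\<dots> = (w * c) * a'" by (simp only: mult.assoc)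
    finally have "1 * a' = (w * c) * a'" .
    moreover have "a' \<noteq> 0" using a' a0 by auto
    ultimately have "w * c = 1" by (metis mult_cancel_right)
    then show False using c(2) linv_unit by blast
  qed
  have W: "\<forall>A B. left_ideal A \<longrightarrow> left_ideal B \<longrightarrow>
        set_mult A B \<subseteq> lprinc a \<longrightarrow> set_mult (lprinc a) B \<subseteq> lprinc a \<longrightarrow>
        A \<subseteq> lprinc a \<or> B \<subseteq> lprinc a"
    using wp unfolding weakly_prime_def by (elim conjE)
  have "lprinc c \<subseteq> lprinc a \<or> lprinc a' \<subseteq> lprinc a"
    using W[rule_format, OF lp_left lp_left h1 h2] .
  then show False using n1 n2 by blast
qed

lemma L4:
  fixes a :: "'a::ring_1_no_zero_divisors"
  assumes no: "\<not> (\<exists>I. two_sided_ideal I \<and> I \<noteq> UNIV \<and> lprinc a \<subseteq> I)"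
    and pr: "lprinc a \<noteq> UNIV"
  shows "weakly_prime (lprinc a)"
  unfolding weakly_prime_def
proof (rule conjI[OF pr], intro allI impI)
  fix A B :: "'a set"
  assume A: "left_ideal A" and B: "left_ideal B"
    and h1: "set_mult A B \<subseteq> lprinc a" and h2: "set_mult (lprinc a) B \<subseteq> lprinc a"
  define L where "L = {x. \<forall>r. \<forall>y\<in>B. x * r * y \<in> lprinc a}"
  have la: "left_ideal (lprinc a)" by (rule lp_left)
  have lL: "left_ideal L" unfolding left_ideal_def L_def
  proof (intro conjI ballI allI)
    show "0 \<in> {x. \<forall>r. \<forall>y\<in>B. x * r * y \<in> lprinc a}" using la left_ideal_def by auto
  next
    fix x y assume "x \<in> {x. \<forall>r. \<forall>y\<in>B. x * r * y \<in> lprinc a}"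
      "y \<in> {x. \<forall>r. \<forall>y\<in>B. x * r * y \<in> lprinc a}"
    then show "x - y \<in> {x. \<forall>r. \<forall>y\<in>B. x * r * y \<in> lprinc a}"
      using la unfolding left_ideal_def by (auto simp: left_diff_distrib)
  next
    fix r x assume "x \<in> {x. \<forall>r. \<forall>y\<in>B. x * r * y \<in> lprinc a}"
    then show "r * x \<in> {x. \<forall>r. \<forall>y\<in>B. x * r * y \<in> lprinc a}"
      using la unfolding left_ideal_def by (auto simp: mult.assoc)
  qed
  have rL: "right_ideal L" unfolding right_ideal_def
  proof (intro conjI ballI allI)
    show "0 \<in> L" using lL unfolding left_ideal_def by blast
  next
    fix x y assume "x \<in> L" "y \<in> L" then show "x - y \<in> L" using lL unfolding left_ideal_def by blast
  next
    fix r x assume x: "x \<in> L"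
    have "x * r * r' * y \<in> lprinc a" if "y \<in> B" for r' y
    proof -
      have "x * (r * r') * y \<in> lprinc a" using x that unfolding L_def by blast
      then show ?thesis by (simp add: mult.assoc)
    qed
    then show "x * r \<in> L" unfolding L_def by blast
  qed
  have AL: "A \<subseteq> L"
  proof
    fix x assume "x \<in> A"
    moreover have "\<forall>r. \<forall>y\<in>B. r * y \<in> B" using B unfolding left_ideal_def by blast
    ultimately have "x * (r * y) \<in> lprinc a" if "y \<in> B" for r y
      using h1 sm_single that by blast
    then show "x \<in> L" unfolding L_def by (simp add: mult.assoc)
  qed
  have aL: "lprinc a \<subseteq> L"
  proof
    fix x assume x: "x \<in> lprinc a"
    then obtain t where t: "x = t * a" unfolding lp_mem by blast
    have "a \<in> lprinc a" using lp_self by blast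
    have "\<forall>r. \<forall>y\<in>B. a * (r * y) \<in> lprinc a"
    proof (intro allI ballI)
      fix r y assume "y \<in> B"
      then have "r * y \<in> B" using B unfolding left_ideal_def by blast
      then show "a * (r * y) \<in> lprinc a" using h2 sm_single[OF \<open>a \<in> lprinc a\<close>] by blast
    qed
    have "x * r * y \<in> lprinc a" if "y \<in> B" for r y
    proof -
      have "a * (r * y) \<in> lprinc a" using \<open>\<forall>r. \<forall>y\<in>B. a * (r * y) \<in> lprinc a\<close> that by blast
      then obtain w where w: "a * (r * y) = w * a" unfolding lp_mem by blast
      have "x * r * y = t * (a * (r * y))" using t by (simp add: mult.assoc)
      also have "\<dots> = (t * w) * a" using w by (simp add: mult.assoc)
      finally show ?thesis using lp_self by simp
    qed
    then show "x \<in> L" unfolding L_def by blast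
  qed
  have "two_sided_ideal L" unfolding two_sided_ideal_def using lL rL by blast
  then have "L = UNIV" using no aL by blast
  then have "1 \<in> L" by simp
  then have "\<forall>y\<in>B. 1 * 1 * y \<in> lprinc a" unfolding L_def by blast
  then have "B \<subseteq> lprinc a" by auto
  then show "A \<subseteq> lprinc a \<or> B \<subseteq> lprinc a" by blast
qed

theorem proposition3p17:
  fixes a :: "'a::ring_1_no_zero_divisors"
  assumes "PID TYPE('a)"
    and "\<not> two_sided_ideal (lprinc a)"
  shows "(weakly_prime (lprinc a) \<longleftrightarrow>
            \<not> (\<exists>c. invariant c \<and> \<not> unit c \<and> is_factor c a))
       \<and> (weakly_prime (lprinc a) \<longleftrightarrow>
            \<not> (\<exists>I. two_sided_ideal I \<and> I \<noteq> UNIV \<and> lprinc a \<subseteq> I))"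
proof -
  have ts0: "two_sided_ideal (lprinc (0::'a))"
  proof -
    have "lprinc (0::'a) = rprinc 0" by (auto simp: lp_mem rp_mem)
    then show ?thesis unfolding two_sided_ideal_def
      by (intro conjI lp_left) (subst \<open>lprinc (0::'a) = rprinc 0\<close>, rule rp_right)
  qed
  have a0: "a \<noteq> 0" using assms(2) ts0 by blast
  have tsU: "two_sided_ideal (UNIV::'a set)"
    unfolding two_sided_ideal_def left_ideal_def right_ideal_def by simp
  have pr: "lprinc a \<noteq> UNIV" 
  proof
    assume "lprinc a = UNIV" then show False using assms(2) tsU by simp
  qed
  have e1: "(\<exists>I. two_sided_ideal I \<and> I \<noteq> UNIV \<and> lprinc a \<subseteq> I) \<longleftrightarrow>
            (\<exists>c. invariant c \<and> \<not> unit c \<and> is_factor c a)"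
  proof
    assume "\<exists>I. two_sided_ideal I \<and> I \<noteq> UNIV \<and> lprinc a \<subseteq> I"
    then obtain I where I: "two_sided_ideal I" "I \<noteq> UNIV" "lprinc a \<subseteq> I" by blast
    show "\<exists>c. invariant c \<and> \<not> unit c \<and> is_factor c a" by (rule L2[OF assms(1) I a0])
  next
    assume "\<exists>c. invariant c \<and> \<not> unit c \<and> is_factor c a"
    then obtain c where c: "invariant c" "\<not> unit c" "is_factor c a" by blast
    have "two_sided_ideal (lprinc c) \<and> lprinc c \<noteq> UNIV \<and> lprinc a \<subseteq> lprinc c"
      by (rule L1[OF c])
    then show "\<exists>I. two_sided_ideal I \<and> I \<noteq> UNIV \<and> lprinc a \<subseteq> I" by (intro exI)
  qed
  have e2: "weakly_prime (lprinc a) \<longleftrightarrow>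
            \<not> (\<exists>I. two_sided_ideal I \<and> I \<noteq> UNIV \<and> lprinc a \<subseteq> I)"
  proof
    assume wp: "weakly_prime (lprinc a)"
    show "\<not> (\<exists>I. two_sided_ideal I \<and> I \<noteq> UNIV \<and> lprinc a \<subseteq> I)"
    proof
      assume "\<exists>I. two_sided_ideal I \<and> I \<noteq> UNIV \<and> lprinc a \<subseteq> I"
      then obtain I where I: "two_sided_ideal I" "I \<noteq> UNIV" "lprinc a \<subseteq> I" by blast
      show False using L3[OF assms I a0] wp by simp
    qed
  next
    assume "\<not> (\<exists>I. two_sided_ideal I \<and> I \<noteq> UNIV \<and> lprinc a \<subseteq> I)"
    then show "weakly_prime (lprinc a)" by (rule L4[OF _ pr])
  qed
  show ?thesis using e1 e2 by simp
qed

end
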